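(* Transport $T$ via $\varepsilon$ to an antilinear map of $(H\otimes R)\oplus(H^*\otimes R^* )$. Then this map is a sum $A_1\otimes B_1+A_2\otimes B_2$ of two pure tensors of $\mathbb C$-antilinear maps, as follows. - If $T$ is mixing: $A_1\otimes B_1:H\otimes R\to H^*\otimes R^*$ with $A_1:H\to H^*$ and $B_1:R\to R^*$, and $A_2\otimes B_2:H^*\otimes R^*\to H\otimes R$ with $A_2:H^*\to H$ and $B_2:R^*\to R$. - If $T$ is nonmixing: $A_1\otimes B_1:H\otimes R\to H\otimes R$ with $A_1:H\to H$ and $B_1:R\to R$, and $A_2\otimes B_2:H^*\otimes R^*\to H^*\otimes R^*$ with $A_2:H^*\to H^*$ and $B_2:R^*\to R^*$.
   Context: Setting: - $G_0$ is a compact group, and $R$ is a finite-dimensional irreducible unitary $G_0$-representation with a $G_0$-invariant Hermitian inner product $\langle\,,\rangle_R$. - $V$ is a finite-dimensional unitary $G_0$-representation with inner product $\langle\,,\rangle_V$, all of whose irreducible subrepresentations are isomorphic to $R$. Duals carry the action $g(f)=f\circ g^{-1}$. - $W=V\oplus V^*$, with antilinear $C:W\to W$ given by $C(v)=\langle v,\cdot\rangle_V$ on $V$ and $C|_{V^*}=(C|_V)^{-1}$. The unitary structure on $V^*$ is transported by $C$. - $H=\mathrm{Hom}_{G_0}(R,V)$, $H^*=\mathrm{Hom}_{G_0}(R^*,V^* )$, and $\varepsilon:(H\otimes R)\oplus(H^*\otimes R^* )\to W$, $h\otimes r+f\otimes t\mapsto h(r)+f(t)$, which is a $G_0$-equivariant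 isomorphism. - The Hermitian form on $H$ is defined by $\langle h_1(r_1),h_2(r_2)\rangle_V=\langle h_1,h_2\rangle_H\langle r_1,r_2\rangle_R$, and similarly on $H^*$. - $T:W\to W$ is an antiunitary operator commuting with $C$, and there is an automorphism $a$ of $G_0$ such that $T\circ g=a(g)\circ T$ on $W$ for all $g\in G_0$. - $T$ is either mixing ($T(V)=V^*$, $T(V^* )=V$) or nonmixing ($T(V)=V$, $T(V^* )=V^*$). For antilinear maps $A,B$, the map $A\otimes B$ is defined by $(A\otimes B)(x\otimes y)=A(x)\otimes B(y)$. *)

theory Defs
  imports "HOL-Analysis.Analysis" "HOL-Algebra.Group"
begin

text \<open>Finite-dimensional complex vector spaces are modelled in coordinates as
  complex^'n; complex-linear maps between them as matrices; the dual space of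
  complex^'n is modelled as complex^'n via the evaluation pairing dual_eval.\<close>

definition dual_eval :: "complex^'n \<Rightarrow> complex^'n \<Rightarrow> complex" where
  "dual_eval f v = (\<Sum>i\<in>UNIV. f$i * v$i)"

definition mscale :: "complex \<Rightarrow> complex^'m^'n \<Rightarrow> complex^'m^'n" where
  "mscale c X = (\<chi> i. c *s X$i)"

text \<open>Antilinear maps (defined on a subset S, w.r.t. given complex scalings).\<close>
definition antilinear_on ::
  "(complex \<Rightarrow> 'a \<Rightarrow> 'a) \<Rightarrow> (complex \<Rightarrow> 'b \<Rightarrow> 'b) \<Rightarrow> 'a set \<Rightarrow> ('a::plus \<Rightarrow> 'b::plus) \<Rightarrow> bool" where
  "antilinear_on sc1 sc2 S f \<longleftrightarrow>
     (\<forall>x\<in>S. \<forall>y\<in>S. f (x + y) = f x + f y) \<and>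
     (\<forall>c. \<forall>x\<in>S. f (sc1 c x) = sc2 (cnj c) (f x))"

text \<open>Hermitian inner product: linear in the 2nd, antilinear in the 1st argument.\<close>
definition herm_ip :: "(complex^'n \<Rightarrow> complex^'n \<Rightarrow> complex) \<Rightarrow> bool" where
  "herm_ip ip \<longleftrightarrow>
     (\<forall>x y z. ip x (y + z) = ip x y + ip x z) \<and>
     (\<forall>c x y. ip x (c *s y) = c * ip x y) \<and>
     (\<forall>x y. ip y x = cnj (ip x y)) \<and>
     (\<forall>x. x \<noteq> 0 \<longrightarrow> 0 < Re (ip x x))"

text \<open>Compact (Hausdorff) topological group.\<close>
definition compact_group :: "('g, 'b) monoid_scheme \<Rightarrow> 'g topology \<Rightarrow> bool" where
  "compact_group G X \<longleftrightarrow> group G \<and> topspace X = carrier G \<and> compact_space X \<and>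
     Hausdorff_space X \<and>
     continuous_map (prod_topology X X) X (\<lambda>(x, y). x \<otimes>\<^bsub>G\<^esub> y) \<and>
     continuous_map X X (\<lambda>x. inv\<^bsub>G\<^esub> x)"

text \<open>Continuous finite-dimensional unitary representation rho of G on complex^'n
  with G-invariant Hermitian inner product ip.\<close>
definition unitary_rep ::
  "('g, 'b) monoid_scheme \<Rightarrow> 'g topology \<Rightarrow> ('g \<Rightarrow> complex^'n^'n)
     \<Rightarrow> (complex^'n \<Rightarrow> complex^'n \<Rightarrow> complex) \<Rightarrow> bool" where
  "unitary_rep G X rho ip \<longleftrightarrow>
     (\<forall>g\<in>carrier G. \<forall>h\<in>carrier G. rho (g \<otimes>\<^bsub>G\<^esub> h) = rho g ** rho h) \<and>
     rho \<one>\<^bsub>G\<^esub> = mat 1 \<and>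
     continuous_map X euclidean rho \<and>
     herm_ip ip \<and>
     (\<forall>g\<in>carrier G. \<forall>x y. ip (rho g *v x) (rho g *v y) = ip x y)"

definition csubspace :: "(complex^'n) set \<Rightarrow> bool" where
  "csubspace S \<longleftrightarrow> 0 \<in> S \<and> (\<forall>x\<in>S. \<forall>y\<in>S. x + y \<in> S) \<and> (\<forall>c. \<forall>x\<in>S. c *s x \<in> S)"

definition invariant_sub ::
  "('g, 'b) monoid_scheme \<Rightarrow> ('g \<Rightarrow> complex^'n^'n) \<Rightarrow> (complex^'n) set \<Rightarrow> bool" where
  "invariant_sub G rho S \<longleftrightarrow> csubspace S \<and> (\<forall>g\<in>carrier G. \<forall>x\<in>S. rho g *v x \<in> S)"

text \<open>Irreducible subrepresentation S (a nonzero invariant subspace with no proper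
  nonzero invariant subspaces).\<close>
definition irreducible_sub ::
  "('g, 'b) monoid_scheme \<Rightarrow> ('g \<Rightarrow> complex^'n^'n) \<Rightarrow> (complex^'n) set \<Rightarrow> bool" where
  "irreducible_sub G rho S \<longleftrightarrow> invariant_sub G rho S \<and> S \<noteq> {0} \<and>
     (\<forall>S'. S' \<subseteq> S \<and> invariant_sub G rho S' \<longrightarrow> S' = {0} \<or> S' = S)"

definition irreducible_rep :: "('g, 'b) monoid_scheme \<Rightarrow> ('g \<Rightarrow> complex^'n^'n) \<Rightarrow> bool" where
  "irreducible_rep G rho \<longleftrightarrow> irreducible_sub G rho UNIV"

text \<open>The subrepresentation S of (complex^'n, rhoV) is isomorphic to (complex^'m, rhoR).\<close>
definition iso_to_sub ::
  "('g, 'b) monoid_scheme \<Rightarrow> ('g \<Rightarrow> complex^'m^'m) \<Rightarrow> ('g \<Rightarrow> complex^'n^'n)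
     \<Rightarrow> (complex^'n) set \<Rightarrow> bool" where
  "iso_to_sub G rhoR rhoV S \<longleftrightarrow>
     (\<exists>P :: complex^'m^'n. bij_betw (\<lambda>r. P *v r) UNIV S \<and>
        (\<forall>g\<in>carrier G. \<forall>r. rhoV g *v (P *v r) = P *v (rhoR g *v r)))"

text \<open>Dual representation g(f) = f o g^-1, in the coordinates of dual_eval.\<close>
definition dual_rep :: "('g, 'b) monoid_scheme \<Rightarrow> ('g \<Rightarrow> complex^'n^'n) \<Rightarrow> 'g \<Rightarrow> complex^'n^'n" where
  "dual_rep G rho g = transpose (rho (inv\<^bsub>G\<^esub> g))"

text \<open>Representation on W = V + V*.\<close>
definition rep_W :: "('g, 'b) monoid_scheme \<Rightarrow> ('g \<Rightarrow> complex^'n^'n) \<Rightarrow> 'g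
     \<Rightarrow> (complex^'n) \<times> (complex^'n) \<Rightarrow> (complex^'n) \<times> (complex^'n)" where
  "rep_W G rho g w = (rho g *v fst w, dual_rep G rho g *v snd w)"

text \<open>C on V: v maps to the functional ip v (-).\<close>
definition C_V :: "(complex^'n \<Rightarrow> complex^'n \<Rightarrow> complex) \<Rightarrow> complex^'n \<Rightarrow> complex^'n" where
  "C_V ip v = (THE f. \<forall>w. dual_eval f w = ip v w)"

text \<open>C on W: C on V, and its inverse on V*.\<close>
definition C_W :: "(complex^'n \<Rightarrow> complex^'n \<Rightarrow> complex)
     \<Rightarrow> (complex^'n) \<times> (complex^'n) \<Rightarrow> (complex^'n) \<times> (complex^'n)" where
  "C_W ip w = (the_inv (C_V ip) (snd w), C_V ip (fst w))"

text \<open>Inner product on W: orthogonal sum, the one on V* transported by C so that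
  C is antiunitary: <C v1, C v2> = <v2, v1>.\<close>
definition ip_W :: "(complex^'n \<Rightarrow> complex^'n \<Rightarrow> complex)
     \<Rightarrow> (complex^'n) \<times> (complex^'n) \<Rightarrow> (complex^'n) \<times> (complex^'n) \<Rightarrow> complex" where
  "ip_W ip w1 w2 = ip (fst w1) (fst w2)
      + ip (the_inv (C_V ip) (snd w2)) (the_inv (C_V ip) (snd w1))"

definition scale_W :: "complex \<Rightarrow> (complex^'n) \<times> (complex^'n) \<Rightarrow> (complex^'n) \<times> (complex^'n)" where
  "scale_W c w = (c *s fst w, c *s snd w)"

definition antiunitary_W :: "(complex^'n \<Rightarrow> complex^'n \<Rightarrow> complex)
     \<Rightarrow> ((complex^'n) \<times> (complex^'n) \<Rightarrow> (complex^'n) \<times> (complex^'n)) \<Rightarrow> bool" where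
  "antiunitary_W ip T \<longleftrightarrow> antilinear_on scale_W scale_W UNIV T \<and> surj T \<and>
     (\<forall>x y. ip_W ip (T x) (T y) = cnj (ip_W ip x y))"

definition V_part :: "((complex^'n) \<times> (complex^'n)) set" where
  "V_part = {(v, 0) | v. True}"

definition Vd_part :: "((complex^'n) \<times> (complex^'n)) set" where
  "Vd_part = {(0, f) | f. True}"

text \<open>H = Hom_G(R, V) and H* = Hom_G(R*, V*), as matrices.\<close>
definition Hom_H :: "('g, 'b) monoid_scheme \<Rightarrow> ('g \<Rightarrow> complex^'m^'m) \<Rightarrow> ('g \<Rightarrow> complex^'n^'n)
     \<Rightarrow> (complex^'m^'n) set" where
  "Hom_H G rhoR rhoV = {X. \<forall>g\<in>carrier G. rhoV g ** X = X ** rhoR g}"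

definition Hom_Hd :: "('g, 'b) monoid_scheme \<Rightarrow> ('g \<Rightarrow> complex^'m^'m) \<Rightarrow> ('g \<Rightarrow> complex^'n^'n)
     \<Rightarrow> (complex^'m^'n) set" where
  "Hom_Hd G rhoR rhoV = {Y. \<forall>g\<in>carrier G. dual_rep G rhoV g ** Y = Y ** dual_rep G rhoR g}"

end

theory Submission
  imports Defs
begin

definition semilin :: "(complex \<Rightarrow> complex) \<Rightarrow> (complex^'a \<Rightarrow> complex^'b) \<Rightarrow> bool" where
  "semilin s f \<longleftrightarrow> (\<forall>x y. f (x + y) = f x + f y) \<and> (\<forall>c x. f (c *s x) = s c *s f x)"

lemma semilin_add: "semilin s f \<Longrightarrow> f (x + y) = f x + f y"
  unfolding semilin_def by blast
lemma semilin_scale: "semilin s f \<Longrightarrow> f (c *s x) = s c *s f x"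
  unfolding semilin_def by blast
lemma semilin_0: "semilin s f \<Longrightarrow> f 0 = 0"
  using semilin_add[of s f 0 0] by simp

lemma semilin_sum:
  assumes "semilin s f" shows "f (sum g A) = (\<Sum>i\<in>A. f (g i))"
proof (cases "finite A")
  case True then show ?thesis
    by (induction A rule: finite_induct) (auto simp: semilin_0[OF assms] semilin_add[OF assms])
qed (simp add: semilin_0[OF assms])

lemma semilin_expand:
  assumes "semilin s f" shows "f x = (\<Sum>i\<in>UNIV. s (x$i) *s f (axis i 1))"
proof -
  have "f x = f (\<Sum>i\<in>UNIV. x$i *s axis i 1)" by (simp add: basis_expansion)
  also have "\<dots> = (\<Sum>i\<in>UNIV. s (x$i) *s f (axis i 1))"
    by (simp add: semilin_sum[OF assms] semilin_scale[OF assms])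
  finally show ?thesis .
qed

definition mat_of :: "(complex^'a \<Rightarrow> complex^'b) \<Rightarrow> complex^'a^'b" where
  "mat_of f = (\<chi> i j. f (axis j 1) $ i)"

lemma mat_of_works:
  assumes "semilin id f" shows "mat_of f *v x = f x"
proof -
  have e: "f x = (\<Sum>j\<in>UNIV. x$j *s f (axis j 1))" using semilin_expand[OF assms, of x] by simp
  show ?thesis unfolding vec_eq_iff
  proof
    fix i
    have "(mat_of f *v x) $ i = (\<Sum>j\<in>UNIV. f (axis j 1) $ i * x $ j)"
      unfolding matrix_vector_mult_def mat_of_def by simp
    also have "\<dots> = (\<Sum>j\<in>UNIV. (x$j *s f (axis j 1)) $ i)"
      by (intro sum.cong refl) (simp add: mult.commute)
    also have "\<dots> = f x $ i" unfolding e by (simp only: sum_component)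
    finally show "(mat_of f *v x) $ i = f x $ i" .
  qed
qed

lemma scaleR_vec_complex: "(r *\<^sub>R (x::complex^'a)) = complex_of_real r *s x"
  unfolding vec_eq_iff vector_scaleR_component vector_smult_component by (simp add: scaleR_conv_of_real)

lemma semilin_linear:
  assumes "semilin s f" "\<And>r. s (complex_of_real r) = complex_of_real r"
  shows "linear f"
  by (rule linearI) (auto simp: scaleR_vec_complex semilin_add[OF assms(1)] semilin_scale[OF assms(1)] assms(2))

definition good_s :: "(complex \<Rightarrow> complex) \<Rightarrow> bool" where
  "good_s s \<longleftrightarrow> s = id \<or> s = cnj"

lemma good_s_real: "good_s s \<Longrightarrow> s (complex_of_real r) = complex_of_real r"
  by (auto simp: good_s_def)
lemma good_s_inv: "good_s s \<Longrightarrow> s (s c) = c"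
  by (auto simp: good_s_def)

lemma semilin_inj_bij:
  fixes f :: "complex^'a \<Rightarrow> complex^'a"
  assumes "semilin s f" "good_s s" "inj f" shows "bij f"
  using linear_injective_imp_surjective[OF semilin_linear[OF assms(1) good_s_real[OF assms(2)]] assms(3)]
    assms(3) by (simp add: bij_def)

lemma semilin_comp: "semilin s f \<Longrightarrow> semilin t g \<Longrightarrow> semilin (s \<circ> t) (f \<circ> g)"
  unfolding semilin_def by auto

lemma semilin_inv:
  fixes f :: "complex^'a \<Rightarrow> complex^'a"
  assumes "semilin s f" "good_s s" "bij f" shows "semilin s (inv_into UNIV f)"
proof -
  have fi: "f (inv_into UNIV f y) = y" for y using assms(3) by (simp add: bij_is_surj surj_f_inv_f)
  have i: "inj f" using assms(3) bij_is_inj by auto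
  show ?thesis unfolding semilin_def
  proof safe
    fix x y show "inv_into UNIV f (x + y) = inv_into UNIV f x + inv_into UNIV f y"
      by (rule injD[OF i]) (simp add: fi semilin_add[OF assms(1)])
  next
    fix c x show "inv_into UNIV f (c *s x) = s c *s inv_into UNIV f x"
      by (rule injD[OF i]) (simp add: fi semilin_scale[OF assms(1)] good_s_inv[OF assms(2)])
  qed
qed

lemma semilin_matrix: "semilin id (\<lambda>x. (A::complex^'a^'b) *v x)"
  by (simp add: semilin_def matrix_vector_right_distrib vector_scalar_commute)

definition cmap :: "(complex^'n \<Rightarrow> complex^'n \<Rightarrow> complex) \<Rightarrow> complex^'n \<Rightarrow> complex^'n" where
  "cmap ip v = (\<chi> i. ip v (axis i 1))"

lemma herm_add1: "herm_ip ip \<Longrightarrow> ip (x + y) z = ip x z + ip y z"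
  unfolding herm_ip_def by (metis complex_cnj_add)
lemma herm_add2: "herm_ip ip \<Longrightarrow> ip z (x + y) = ip z x + ip z y"
  unfolding herm_ip_def by metis
lemma herm_scale2: "herm_ip ip \<Longrightarrow> ip z (c *s y) = c * ip z y"
  unfolding herm_ip_def by metis
lemma herm_scale1: "herm_ip ip \<Longrightarrow> ip (c *s y) z = cnj c * ip y z"
  unfolding herm_ip_def by (metis complex_cnj_mult complex_cnj_cnj)
lemma herm_pos: "herm_ip ip \<Longrightarrow> x \<noteq> 0 \<Longrightarrow> 0 < Re (ip x x)"
  unfolding herm_ip_def by metis

lemma semilin_ip2: "herm_ip ip \<Longrightarrow> ip z w = (\<Sum>i\<in>UNIV. w$i * ip z (axis i 1))"
proof -
  assume h: "herm_ip ip"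
  have s: "semilin id (\<lambda>w. (\<chi> k::'a. ip z w))"
    unfolding semilin_def by (simp add: vec_eq_iff herm_add2[OF h] herm_scale2[OF h])
  have "(\<chi> k::'a. ip z w) = (\<Sum>i\<in>UNIV. w$i *s (\<chi> k::'a. ip z (axis i 1)))"
    using semilin_expand[OF s, of w] by simp
  then have "(\<chi> k::'a. ip z w) $ undefined = (\<Sum>i\<in>UNIV. w$i *s (\<chi> k::'a. ip z (axis i 1))) $ undefined"
    by simp
  then show ?thesis by (simp add: sum_component)
qed

lemma cmap_semilin: "herm_ip ip \<Longrightarrow> semilin cnj (cmap ip)"
  unfolding semilin_def cmap_def by (simp add: vec_eq_iff herm_add1 herm_scale1)

lemma cmap_inj: assumes h: "herm_ip ip" shows "inj (cmap ip)"
proof (rule injI)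
  fix x y assume e: "cmap ip x = cmap ip y"
  have "cmap ip (x - y) = 0"
    using semilin_add[OF cmap_semilin[OF h], of "x - y" y] e by simp
  then have z: "ip (x - y) (axis i 1) = 0" for i
    unfolding cmap_def vec_eq_iff by simp
  have "ip (x - y) (x - y) = 0"
    by (subst semilin_ip2[OF h]) (simp add: z)
  then show "x = y" using herm_pos[OF h, of "x - y"] by auto
qed

lemma cmap_bij: "herm_ip ip \<Longrightarrow> bij (cmap ip)"
  by (rule semilin_inj_bij[OF cmap_semilin _ cmap_inj]) (auto simp: good_s_def)

lemma rep_inv:
  assumes "group G" "unitary_rep G X rho ip" "g \<in> carrier G"
  shows "rho g ** rho (inv\<^bsub>G\<^esub> g) = mat 1"
proof -
  have "rho g ** rho (inv\<^bsub>G\<^esub> g) = rho (g \<otimes>\<^bsub>G\<^esub> inv\<^bsub>G\<^esub> g)"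
    using assms unfolding unitary_rep_def by (simp add: group.inv_closed)
  also have "\<dots> = mat 1" using assms unfolding unitary_rep_def by (simp add: group.r_inv)
  finally show ?thesis .
qed

lemma cmap_equiv:
  assumes G: "group G" and u: "unitary_rep G X rho ip" and g: "g \<in> carrier G"
  shows "cmap ip (rho g *v v) = dual_rep G rho g *v cmap ip v"
proof -
  have h: "herm_ip ip" using u unfolding unitary_rep_def by blast
  have gi: "inv\<^bsub>G\<^esub> g \<in> carrier G" using G g by (simp add: group.inv_closed)
  have inv: "ip (rho g *v x) (rho g *v y) = ip x y" for x y using u g unfolding unitary_rep_def by blast
  show ?thesis
  proof (subst vec_eq_iff, rule allI)
    fix i
    have "ip (rho g *v v) (axis i 1) = ip (rho g *v v) (rho g *v (rho (inv\<^bsub>G\<^esub> g) *v axis i 1))"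
      by (simp add: matrix_vector_mul_assoc rep_inv[OF G u g])
    also have "\<dots> = ip v (rho (inv\<^bsub>G\<^esub> g) *v axis i 1)" by (rule inv)
    also have "\<dots> = (\<Sum>j\<in>UNIV. rho (inv\<^bsub>G\<^esub> g) $ j $ i * ip v (axis j 1))"
      by (subst semilin_ip2[OF h]) (simp add: matrix_vector_mult_def axis_def if_distrib if_distribR cong: if_cong)
    finally show "cmap ip (rho g *v v) $ i = (dual_rep G rho g *v cmap ip v) $ i"
      by (simp add: cmap_def dual_rep_def matrix_vector_mult_def transpose_def)
  qed
qed

lemma csub_subspace: "csubspace S \<Longrightarrow> subspace S"
  unfolding csubspace_def subspace_def by (simp add: scaleR_vec_complex)

lemma exists_irred:
  fixes rho :: "'g \<Rightarrow> complex^'n^'n"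
  shows "\<exists>S. irreducible_sub G rho S"
proof -
  let ?P = "\<lambda>d. \<exists>S. invariant_sub G rho S \<and> S \<noteq> {0} \<and> dim S = d"
  have ex: "\<exists>d. ?P d"
  proof -
    have "invariant_sub G rho UNIV" unfolding invariant_sub_def csubspace_def by simp
    moreover have "(UNIV :: (complex^'n) set) \<noteq> {0}"
      by (metis axis_eq_0_iff insertI1 one_neq_zero singletonD UNIV_I)
    ultimately show ?thesis by blast
  qed
  obtain d where d: "?P d" and dmin: "\<And>d'. d' < d \<Longrightarrow> \<not> ?P d'"
    using ex exists_least_iff[of ?P] by blast
  obtain S where S: "invariant_sub G rho S" "S \<noteq> {0}" "dim S = d" using d by blast
  have "irreducible_sub G rho S" unfolding irreducible_sub_def
  proof (intro conjI S allI impI)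
    fix S' assume a: "S' \<subseteq> S \<and> invariant_sub G rho S'"
    show "S' = {0} \<or> S' = S"
    proof (rule ccontr)
      assume n: "\<not> (S' = {0} \<or> S' = S)"
      have "dim S' \<le> dim S" using a dim_subset by blast
      moreover have "dim S' \<noteq> dim S"
      proof
        assume "dim S' = dim S"
        moreover have "subspace S'" "subspace S" using a S csub_subspace unfolding invariant_sub_def by auto
        ultimately have "S' = S" using subspace_dim_equal[of S' S] a by auto
        then show False using n by blast
      qed
      ultimately have "dim S' < d" using S by auto
      then show False using dmin a n by blast
    qed
  qed
  then show ?thesis by blast
qed

lemma core:
  fixes rhoR :: "'g \<Rightarrow> complex^'m^'m" and rhoV :: "'g \<Rightarrow> complex^'n^'n"
    and M :: "complex^'n \<Rightarrow> complex^'n"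
  assumes asurj: "\<And>g. g \<in> carrier G \<Longrightarrow> \<exists>g'\<in>carrier G. a g' = g"
    and aclos: "\<And>g. g \<in> carrier G \<Longrightarrow> a g \<in> carrier G"
    and irrR: "irreducible_rep G rhoR"
    and isoV: "\<forall>S. irreducible_sub G rhoV S \<longrightarrow> iso_to_sub G rhoR rhoV S"
    and sM: "semilin s M" and gs: "good_s s" and iM: "inj M"
    and eqM: "\<And>g v. g \<in> carrier G \<Longrightarrow> M (rhoV g *v v) = rhoV (a g) *v M v"
  shows "\<exists>N. semilin s N \<and> bij N \<and> (\<forall>g\<in>carrier G. \<forall>r. N (rhoR g *v r) = rhoR (a g) *v N r)"
proof -
  obtain S0 where S0: "irreducible_sub G rhoV S0" using exists_irred by blast
  obtain P :: "complex^'m^'n" where P: "bij_betw (\<lambda>r. P *v r) UNIV S0"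
     "\<And>g r. g \<in> carrier G \<Longrightarrow> rhoV g *v (P *v r) = P *v (rhoR g *v r)"
    using isoV S0 unfolding iso_to_sub_def by blast
  have iP: "inj (\<lambda>r. P *v r)" using P(1) bij_betw_def by blast
  define F where "F r = M (P *v r)" for r
  have sF: "semilin s F"
    using semilin_comp[OF sM semilin_matrix[of P]] unfolding F_def comp_def by (simp add: comp_def)
  have iF: "inj F" unfolding F_def using iM iP by (simp add: inj_def)
  have eqF: "F (rhoR g *v r) = rhoV (a g) *v F r" if "g \<in> carrier G" for g r
    unfolding F_def using that P(2)[of g r] eqM[of g] by metis
  have F0: "F 0 = 0" using semilin_0[OF sF] .
  have Fadd: "F (x + y) = F x + F y" for x y using semilin_add[OF sF] .
  have Fsc: "F (c *s x) = s c *s F x" for c x using semilin_scale[OF sF] .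
  have irrR': "\<And>S'. invariant_sub G rhoR S' \<Longrightarrow> S' = {0} \<or> S' = UNIV"
    using irrR unfolding irreducible_rep_def irreducible_sub_def by blast
  let ?Im = "range F"
  have csIm: "csubspace ?Im" unfolding csubspace_def
  proof (intro conjI ballI allI)
    show "0 \<in> ?Im" using F0 by (metis rangeI)
    fix x y assume "x \<in> ?Im" "y \<in> ?Im" then show "x + y \<in> ?Im" using Fadd by (auto simp: image_iff) (metis)
  next
    fix c x assume "x \<in> ?Im"
    then obtain r where "x = F r" by blast
    then have "c *s x = F (s c *s r)" using Fsc good_s_inv[OF gs] by simp
    then show "c *s x \<in> ?Im" by blast
  qed
  have invIm: "invariant_sub G rhoV ?Im" unfolding invariant_sub_def
  proof (intro conjI csIm ballI)
    fix g x assume g: "g \<in> carrier G" and "x \<in> ?Im"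
    then obtain r where r: "x = F r" by blast
    obtain g' where g': "g' \<in> carrier G" "a g' = g" using asurj[OF g] by blast
    have "rhoV g *v x = F (rhoR g' *v r)" using eqF[OF g'(1)] g' r by simp
    then show "rhoV g *v x \<in> ?Im" by blast
  qed
  have nz: "?Im \<noteq> {0}"
  proof
    assume "?Im = {0}"
    then have "F (axis undefined 1) = F 0" using F0 by auto
    then have "axis undefined (1::complex) = (0::complex^'m)" using iF by (meson injD)
    then show False by (simp add: axis_eq_0_iff)
  qed
  have irrIm: "irreducible_sub G rhoV ?Im" unfolding irreducible_sub_def
  proof (intro conjI invIm nz allI impI)
    fix S' assume a: "S' \<subseteq> ?Im \<and> invariant_sub G rhoV S'"
    let ?Pre = "{r. F r \<in> S'}"
    have csS': "csubspace S'" and invS': "\<And>g x. g \<in> carrier G \<Longrightarrow> x \<in> S' \<Longrightarrow> rhoV g *v x \<in> S'"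
      using a unfolding invariant_sub_def by auto
    have "invariant_sub G rhoR ?Pre" unfolding invariant_sub_def csubspace_def
      using csS' unfolding csubspace_def
      by (auto simp: F0 Fadd Fsc eqF invS' aclos)
    then have "?Pre = {0} \<or> ?Pre = UNIV" by (rule irrR')
    moreover have "S' = F ` ?Pre" using a by auto
    ultimately show "S' = {0} \<or> S' = ?Im" using F0 by auto
  qed
  obtain Q :: "complex^'m^'n" where Q: "bij_betw (\<lambda>r. Q *v r) UNIV ?Im"
     "\<And>g r. g \<in> carrier G \<Longrightarrow> rhoV g *v (Q *v r) = Q *v (rhoR g *v r)"
    using isoV irrIm unfolding iso_to_sub_def by blast
  have iQ: "inj (\<lambda>r. Q *v r)" using Q(1) bij_betw_def by blast
  define N where "N r = inv_into UNIV (\<lambda>r. Q *v r) (F r)" for r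
  have QN: "Q *v N r = F r" for r
    unfolding N_def using Q(1) by (metis bij_betw_def f_inv_into_f rangeI)
  have Qeq: "x = y" if "Q *v x = Q *v y" for x y using iQ that by (simp add: inj_def)
  have sN: "semilin s N" unfolding semilin_def
    by (auto intro!: Qeq simp: QN Fadd Fsc matrix_vector_right_distrib vector_scalar_commute)
  have iN: "inj N" by (rule injI) (metis QN iF injD)
  have bN: "bij N" using semilin_inj_bij[OF sN gs iN] .
  have eN: "N (rhoR g *v r) = rhoR (a g) *v N r" if "g \<in> carrier G" for g r
    by (rule Qeq) (simp add: QN eqF[OF that] Q(2)[OF aclos[OF that], symmetric])
  show ?thesis using sN bN eN by blast
qed

lemma mscale_mult: "mscale c h *v y = c *s (h *v y)"
  by (simp add: mscale_def vec_eq_iff matrix_vector_mult_def sum_distrib_left mult.assoc)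

lemma A_constr:
  fixes Phi :: "complex^'n \<Rightarrow> complex^'n" and B :: "complex^'m \<Rightarrow> complex^'m"
    and rhoA rhoB :: "'g \<Rightarrow> complex^'n^'n" and tauA tauB :: "'g \<Rightarrow> complex^'m^'m"
  assumes sP: "semilin cnj Phi" and sB: "semilin cnj B" and bB: "bij B"
    and asurj: "\<And>g. g \<in> carrier G \<Longrightarrow> \<exists>g'\<in>carrier G. a g' = g"
    and eP: "\<And>g x. g \<in> carrier G \<Longrightarrow> Phi (rhoA g *v x) = rhoB (a g) *v Phi x"
    and eB: "\<And>g x. g \<in> carrier G \<Longrightarrow> B (tauA g *v x) = tauB (a g) *v B x"
  shows "\<exists>A. A ` {h. \<forall>g\<in>carrier G. rhoA g ** h = h ** tauA g} \<subseteq> {k. \<forall>g\<in>carrier G. rhoB g ** k = k ** tauB g}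
     \<and> antilinear_on mscale mscale S A \<and> (\<forall>h r. A h *v B r = Phi (h *v r))"
proof -
  define Bi where "Bi = inv_into UNIV B"
  have sBi: "semilin cnj Bi" unfolding Bi_def by (rule semilin_inv[OF sB _ bB]) (simp add: good_s_def)
  have BiB: "Bi (B r) = r" for r unfolding Bi_def using bB by (simp add: bij_is_inj)
  have BBi: "B (Bi r) = r" for r unfolding Bi_def using bB by (simp add: bij_is_surj surj_f_inv_f)
  define A where "A h = mat_of (\<lambda>y. Phi (h *v Bi y))" for h
  have sC: "semilin id (\<lambda>y. Phi (h *v Bi y))" for h
  proof -
    have "semilin ((cnj \<circ> id) \<circ> cnj) (Phi \<circ> (\<lambda>x. h *v x) \<circ> Bi)"
      by (intro semilin_comp sP sBi semilin_matrix)
    moreover have "(cnj \<circ> id) \<circ> cnj = id" by (simp add: fun_eq_iff)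
    ultimately show ?thesis by (simp add: comp_def)
  qed
  have Aw: "A h *v y = Phi (h *v Bi y)" for h y unfolding A_def by (rule mat_of_works[OF sC])
  have eq: "\<forall>h r. A h *v B r = Phi (h *v r)" by (simp add: Aw BiB)
  have Bieq: "Bi (tauB (a g) *v y) = tauA g *v Bi y" if "g \<in> carrier G" for g y
    by (metis BBi BiB eB[OF that])
  have mem: "A ` {h. \<forall>g\<in>carrier G. rhoA g ** h = h ** tauA g} \<subseteq> {k. \<forall>g\<in>carrier G. rhoB g ** k = k ** tauB g}"
  proof safe
    fix h g' assume h: "\<forall>g\<in>carrier G. rhoA g ** h = h ** tauA g" and g': "g' \<in> carrier G"
    obtain g where g: "g \<in> carrier G" "a g = g'" using asurj[OF g'] by blast
    show "rhoB g' ** A h = A h ** tauB g'"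
      unfolding matrix_eq
    proof
      fix y
      have "(A h ** tauB g') *v y = Phi (h *v (tauA g *v Bi y))"
        by (simp add: matrix_vector_mul_assoc[symmetric] Aw Bieq[OF g(1)] g(2)[symmetric])
      also have "\<dots> = Phi (rhoA g *v (h *v Bi y))"
        using h g(1) by (simp add: matrix_vector_mul_assoc)
      also have "\<dots> = (rhoB g' ** A h) *v y"
        by (simp add: eP[OF g(1)] g(2) Aw matrix_vector_mul_assoc[symmetric])
      finally show "(rhoB g' ** A h) *v y = (A h ** tauB g') *v y" by simp
    qed
  qed
  have al: "antilinear_on mscale mscale S A" unfolding antilinear_on_def
  proof (intro conjI ballI allI)
    fix x y show "A (x + y) = A x + A y"
      by (simp add: matrix_eq Aw matrix_vector_mult_add_rdistrib semilin_add[OF sP] del: vec_eq_iff)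
  next
    fix c x show "A (mscale c x) = mscale (cnj c) (A x)"
      by (simp add: matrix_eq Aw mscale_mult semilin_scale[OF sP] del: vec_eq_iff)
  qed
  show ?thesis using mem al eq by blast
qed

lemma semilin_antilin: "semilin cnj B \<Longrightarrow> antilinear_on (*s) (*s) UNIV B"
  unfolding semilin_def antilinear_on_def by blast

theorem proposition3p5:
  fixes G :: "('g, 'b) monoid_scheme" and X :: "'g topology"
    and rhoR :: "'g \<Rightarrow> complex^'m^'m" and ipR :: "complex^'m \<Rightarrow> complex^'m \<Rightarrow> complex"
    and rhoV :: "'g \<Rightarrow> complex^'n^'n" and ipV :: "complex^'n \<Rightarrow> complex^'n \<Rightarrow> complex"
    and T :: "(complex^'n) \<times> (complex^'n) \<Rightarrow> (complex^'n) \<times> (complex^'n)"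
    and a :: "'g \<Rightarrow> 'g"
  assumes "compact_group G X"
    and "unitary_rep G X rhoR ipR" and "irreducible_rep G rhoR"
    and "unitary_rep G X rhoV ipV"
    and "\<forall>S. irreducible_sub G rhoV S \<longrightarrow> iso_to_sub G rhoR rhoV S"
    and "antiunitary_W ipV T"
    and "T \<circ> C_W ipV = C_W ipV \<circ> T"
    and "a \<in> iso G G"
    and "\<forall>g\<in>carrier G. \<forall>w. T (rep_W G rhoV g w) = rep_W G rhoV (a g) (T w)"
    and "(T ` V_part = Vd_part \<and> T ` Vd_part = V_part) \<or> (T ` V_part = V_part \<and> T ` Vd_part = Vd_part)"
  shows "(T ` V_part = Vd_part \<and> T ` Vd_part = V_part \<longrightarrow>
           (\<exists>(A1 :: complex^'m^'n \<Rightarrow> complex^'m^'n) (B1 :: complex^'m \<Rightarrow> complex^'m)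
              (A2 :: complex^'m^'n \<Rightarrow> complex^'m^'n) (B2 :: complex^'m \<Rightarrow> complex^'m).
              A1 ` Hom_H G rhoR rhoV \<subseteq> Hom_Hd G rhoR rhoV \<and>
              antilinear_on mscale mscale (Hom_H G rhoR rhoV) A1 \<and>
              antilinear_on (*s) (*s) UNIV B1 \<and>
              A2 ` Hom_Hd G rhoR rhoV \<subseteq> Hom_H G rhoR rhoV \<and>
              antilinear_on mscale mscale (Hom_Hd G rhoR rhoV) A2 \<and>
              antilinear_on (*s) (*s) UNIV B2 \<and>
              (\<forall>h\<in>Hom_H G rhoR rhoV. \<forall>r. T (h *v r, 0) = (0, A1 h *v B1 r)) \<and>
              (\<forall>f\<in>Hom_Hd G rhoR rhoV. \<forall>t. T (0, f *v t) = (A2 f *v B2 t, 0))))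
       \<and> (T ` V_part = V_part \<and> T ` Vd_part = Vd_part \<longrightarrow>
           (\<exists>(A1 :: complex^'m^'n \<Rightarrow> complex^'m^'n) (B1 :: complex^'m \<Rightarrow> complex^'m)
              (A2 :: complex^'m^'n \<Rightarrow> complex^'m^'n) (B2 :: complex^'m \<Rightarrow> complex^'m).
              A1 ` Hom_H G rhoR rhoV \<subseteq> Hom_H G rhoR rhoV \<and>
              antilinear_on mscale mscale (Hom_H G rhoR rhoV) A1 \<and>
              antilinear_on (*s) (*s) UNIV B1 \<and>
              A2 ` Hom_Hd G rhoR rhoV \<subseteq> Hom_Hd G rhoR rhoV \<and>
              antilinear_on mscale mscale (Hom_Hd G rhoR rhoV) A2 \<and>
              antilinear_on (*s) (*s) UNIV B2 \<and>
              (\<forall>h\<in>Hom_H G rhoR rhoV. \<forall>r. T (h *v r, 0) = (A1 h *v B1 r, 0)) \<and>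
              (\<forall>f\<in>Hom_Hd G rhoR rhoV. \<forall>t. T (0, f *v t) = (0, A2 f *v B2 t))))"
    (is "(?c1 \<longrightarrow> ?P1) \<and> (?c2 \<longrightarrow> ?P2)")
proof -
  have G: "group G" using assms(1) unfolding compact_group_def by blast
  have abij: "bij_betw a (carrier G) (carrier G)" using assms(8) unfolding iso_def by blast
  have aclos: "\<And>g. g \<in> carrier G \<Longrightarrow> a g \<in> carrier G" using abij bij_betwE by blast
  have asurj: "\<And>g. g \<in> carrier G \<Longrightarrow> \<exists>g'\<in>carrier G. a g' = g" using abij
    by (metis bij_betw_imp_surj_on imageE)
  have uR: "unitary_rep G X rhoR ipR" by (rule assms(2))
  have hR: "herm_ip ipR" using uR unfolding unitary_rep_def by blast
  have hV: "herm_ip ipV" using assms(4) unfolding unitary_rep_def by blast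
  have Tal: "antilinear_on scale_W scale_W UNIV T" and Ts: "surj T"
    using assms(6) unfolding antiunitary_W_def by auto
  have Tadd: "T (x + y) = T x + T y" for x y using Tal unfolding antilinear_on_def by blast
  have Tsc: "T (scale_W c x) = scale_W (cnj c) (T x)" for c x using Tal unfolding antilinear_on_def by blast
  have Tlin: "linear T"
  proof (rule linearI)
    show "T (x + y) = T x + T y" for x y by (rule Tadd)
    fix r :: real and x
    have "r *\<^sub>R x = scale_W (complex_of_real r) x" for x :: "(complex^'n) \<times> (complex^'n)"
      by (simp add: scale_W_def scaleR_vec_complex prod_eq_iff)
    then show "T (r *\<^sub>R x) = r *\<^sub>R T x" by (simp add: Tsc)
  qed
  have Ti: "inj T" using linear_surjective_imp_injective[OF Tlin Ts] by simp
  have Teq: "\<And>g w. g \<in> carrier G \<Longrightarrow> T (rep_W G rhoV g w) = rep_W G rhoV (a g) (T w)"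
    using assms(9) by blast
  have Tv: "T (rhoV g *v v, 0) = rep_W G rhoV (a g) (T (v, 0))" if "g \<in> carrier G" for g v
    using Teq[OF that, of "(v, 0)"] by (simp add: rep_W_def)
  have Tf: "T (0, dual_rep G rhoV g *v f) = rep_W G rhoV (a g) (T (0, f))" if "g \<in> carrier G" for g f
    using Teq[OF that, of "(0, f)"] by (simp add: rep_W_def)
  have sFst: "semilin cnj (\<lambda>v. fst (T (v, 0)))" "semilin cnj (\<lambda>v. snd (T (v, 0)))"
    "semilin cnj (\<lambda>v. fst (T (0, v)))" "semilin cnj (\<lambda>v. snd (T (0, v)))"
    unfolding semilin_def
    using Tadd[of "(_, 0)" "(_, 0)"] Tsc[of _ "(_, 0)"] Tadd[of "(0, _)" "(0, _)"] Tsc[of _ "(0, _)"]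
    by (auto simp: scale_W_def)
  define Cr where "Cr = cmap ipR"
  have sCr: "semilin cnj Cr" and bCr: "bij Cr" unfolding Cr_def using cmap_semilin[OF hR] cmap_bij[OF hR] by auto
  have eCr: "\<And>g r. g \<in> carrier G \<Longrightarrow> Cr (rhoR g *v r) = dual_rep G rhoR g *v Cr r"
    unfolding Cr_def by (rule cmap_equiv[OF G uR])
  define Cri where "Cri = inv_into UNIV Cr"
  have sCri: "semilin cnj Cri" unfolding Cri_def by (rule semilin_inv[OF sCr _ bCr]) (simp add: good_s_def)
  have bCri: "bij Cri" unfolding Cri_def using bCr by (simp add: bij_imp_bij_inv)
  have CriCr: "Cri (Cr r) = r" for r unfolding Cri_def using bCr by (simp add: bij_is_inj)
  have CrCri: "Cr (Cri r) = r" for r unfolding Cri_def using bCr by (simp add: bij_is_surj surj_f_inv_f)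
  have eCri: "Cri (dual_rep G rhoR g *v x) = rhoR g *v Cri x" if "g \<in> carrier G" for g x
    by (metis CrCri CriCr eCr[OF that])
  have P1: ?P1 if mix: "T ` V_part = Vd_part \<and> T ` Vd_part = V_part"
  proof -
    have f0: "fst (T (v, 0)) = 0" for v
    proof -
      have "(v, 0) \<in> V_part" unfolding V_part_def by blast
      then have "T (v, 0) \<in> Vd_part" using mix by blast
      then show ?thesis unfolding Vd_part_def by auto
    qed
    have s0: "snd (T (0, f)) = 0" for f
    proof -
      have "(0, f) \<in> Vd_part" unfolding Vd_part_def by blast
      then have "T (0, f) \<in> V_part" using mix by blast
      then show ?thesis unfolding V_part_def by auto
    qed
    define Sd where "Sd f = fst (T (0, f))" for f
    have TSd: "T (0, f) = (Sd f, 0)" for f by (simp add: Sd_def prod_eq_iff s0)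
    have iSd: "inj Sd" by (rule injI) (metis TSd Ti injD prod.inject)
    have eSd: "Sd (dual_rep G rhoV g *v f) = rhoV (a g) *v Sd f" if "g \<in> carrier G" for g f
      unfolding Sd_def using Tf[OF that, of f] by (simp add: rep_W_def)
    define M where "M = Sd \<circ> cmap ipV"
    have sM: "semilin id M"
    proof -
      have "semilin (cnj \<circ> cnj) M" unfolding M_def Sd_def
        by (rule semilin_comp[OF sFst(3) cmap_semilin[OF hV]])
      moreover have "cnj \<circ> cnj = id" by (simp add: fun_eq_iff)
      ultimately show ?thesis by simp
    qed
    have iM: "inj M" unfolding M_def using iSd cmap_inj[OF hV] by (simp add: inj_compose)
    have eM: "M (rhoV g *v v) = rhoV (a g) *v M v" if "g \<in> carrier G" for g v
      unfolding M_def using eSd[OF that] cmap_equiv[OF G assms(4) that] by simp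
    obtain L where L: "semilin id L" "bij L" "\<And>g r. g \<in> carrier G \<Longrightarrow> L (rhoR g *v r) = rhoR (a g) *v L r"
      using core[OF asurj aclos assms(3) assms(5) sM _ iM eM] by (auto simp: good_s_def)
    define B1 where "B1 = Cr \<circ> L"
    have sB1: "semilin cnj B1" using semilin_comp[OF sCr L(1)] unfolding B1_def by (simp add: comp_def)
    have bB1: "bij B1" unfolding B1_def using bCr L(2) by (simp add: bij_comp)
    have eB1: "B1 (rhoR g *v r) = dual_rep G rhoR (a g) *v B1 r" if "g \<in> carrier G" for g r
      unfolding B1_def using L(3)[OF that] eCr[OF aclos[OF that]] by simp
    define B2 where "B2 = L \<circ> Cri"
    have sB2: "semilin cnj B2" using semilin_comp[OF L(1) sCri] unfolding B2_def by (simp add: comp_def)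
    have bB2: "bij B2" unfolding B2_def using bCri L(2) by (simp add: bij_comp)
    have eB2: "B2 (dual_rep G rhoR g *v r) = rhoR (a g) *v B2 r" if "g \<in> carrier G" for g r
      unfolding B2_def using L(3)[OF that] eCri[OF that] by simp
    have eP1: "snd (T (rhoV g *v v, 0)) = dual_rep G rhoV (a g) *v snd (T (v, 0))" if "g \<in> carrier G" for g v
      using Tv[OF that, of v] by (simp add: rep_W_def)
    obtain A1 where A1: "A1 ` Hom_H G rhoR rhoV \<subseteq> Hom_Hd G rhoR rhoV"
        "antilinear_on mscale mscale (Hom_H G rhoR rhoV) A1"
        "\<And>h r. A1 h *v B1 r = snd (T (h *v r, 0))"
      using A_constr[where rhoA=rhoV and rhoB="dual_rep G rhoV" and tauA=rhoR and tauB="dual_rep G rhoR", OF sFst(2) sB1 bB1 asurj eP1 eB1, of "Hom_H G rhoR rhoV"]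
      unfolding Hom_H_def Hom_Hd_def by blast
    obtain A2 where A2: "A2 ` Hom_Hd G rhoR rhoV \<subseteq> Hom_H G rhoR rhoV"
        "antilinear_on mscale mscale (Hom_Hd G rhoR rhoV) A2"
        "\<And>h r. A2 h *v B2 r = Sd (h *v r)"
      using A_constr[where rhoA="dual_rep G rhoV" and rhoB=rhoV and tauA="dual_rep G rhoR" and tauB=rhoR, OF sFst(3)[folded Sd_def] sB2 bB2 asurj eSd eB2, of "Hom_Hd G rhoR rhoV"]
      unfolding Hom_H_def Hom_Hd_def by blast
    have "\<forall>h\<in>Hom_H G rhoR rhoV. \<forall>r. T (h *v r, 0) = (0, A1 h *v B1 r)"
      by (simp add: A1(3) prod_eq_iff f0)
    moreover have "\<forall>f\<in>Hom_Hd G rhoR rhoV. \<forall>t. T (0, f *v t) = (A2 f *v B2 t, 0)"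
      by (simp add: A2(3) TSd)
    ultimately show ?thesis using A1(1,2) A2(1,2) semilin_antilin[OF sB1] semilin_antilin[OF sB2]
      apply - apply (rule exI[where x=A1], rule exI[where x=B1], rule exI[where x=A2], rule exI[where x=B2])
      by (intro conjI; assumption)
  qed
  have P2: ?P2 if nmix: "T ` V_part = V_part \<and> T ` Vd_part = Vd_part"
  proof -
    have s0: "snd (T (v, 0)) = 0" for v
    proof -
      have "(v, 0) \<in> V_part" unfolding V_part_def by blast
      then have "T (v, 0) \<in> V_part" using nmix by blast
      then show ?thesis unfolding V_part_def by auto
    qed
    have f0: "fst (T (0, f)) = 0" for f
    proof -
      have "(0, f) \<in> Vd_part" unfolding Vd_part_def by blast
      then have "T (0, f) \<in> Vd_part" using nmix by blast
      then show ?thesis unfolding Vd_part_def by auto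
    qed
    define S where "S v = fst (T (v, 0))" for v
    have TS: "T (v, 0) = (S v, 0)" for v by (simp add: S_def prod_eq_iff s0)
    have iS: "inj S" by (rule injI) (metis TS Ti injD prod.inject)
    have eS: "S (rhoV g *v v) = rhoV (a g) *v S v" if "g \<in> carrier G" for g v
      unfolding S_def using Tv[OF that, of v] by (simp add: rep_W_def)
    obtain K where K: "semilin cnj K" "bij K" "\<And>g r. g \<in> carrier G \<Longrightarrow> K (rhoR g *v r) = rhoR (a g) *v K r"
      using core[OF asurj aclos assms(3) assms(5) sFst(1)[folded S_def] _ iS eS] by (auto simp: good_s_def)
    define B2 where "B2 = Cr \<circ> K \<circ> Cri"
    have sB2: "semilin cnj B2"
    proof -
      have "semilin ((cnj \<circ> cnj) \<circ> cnj) B2" unfolding B2_def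
        by (intro semilin_comp sCr K(1) sCri)
      moreover have "(cnj \<circ> cnj) \<circ> cnj = cnj" by (simp add: fun_eq_iff)
      ultimately show ?thesis by simp
    qed
    have bB2: "bij B2" unfolding B2_def using bCri bCr K(2) by (simp add: bij_comp)
    have eB2: "B2 (dual_rep G rhoR g *v r) = dual_rep G rhoR (a g) *v B2 r" if "g \<in> carrier G" for g r
      unfolding B2_def using K(3)[OF that] eCri[OF that] eCr[OF aclos[OF that]] by simp
    define Sdd where "Sdd f = snd (T (0, f))" for f
    have TSdd: "T (0, f) = (0, Sdd f)" for f by (simp add: Sdd_def prod_eq_iff f0)
    have eSdd: "Sdd (dual_rep G rhoV g *v f) = dual_rep G rhoV (a g) *v Sdd f" if "g \<in> carrier G" for g f
      unfolding Sdd_def using Tf[OF that, of f] by (simp add: rep_W_def)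
    obtain A1 where A1: "A1 ` Hom_H G rhoR rhoV \<subseteq> Hom_H G rhoR rhoV"
        "antilinear_on mscale mscale (Hom_H G rhoR rhoV) A1"
        "\<And>h r. A1 h *v K r = S (h *v r)"
      using A_constr[where rhoA=rhoV and rhoB=rhoV and tauA=rhoR and tauB=rhoR, OF sFst(1)[folded S_def] K(1) K(2) asurj eS K(3), of "Hom_H G rhoR rhoV"]
      unfolding Hom_H_def Hom_Hd_def by blast
    obtain A2 where A2: "A2 ` Hom_Hd G rhoR rhoV \<subseteq> Hom_Hd G rhoR rhoV"
        "antilinear_on mscale mscale (Hom_Hd G rhoR rhoV) A2"
        "\<And>h r. A2 h *v B2 r = Sdd (h *v r)"
      using A_constr[where rhoA="dual_rep G rhoV" and rhoB="dual_rep G rhoV" and tauA="dual_rep G rhoR" and tauB="dual_rep G rhoR", OF sFst(4)[folded Sdd_def] sB2 bB2 asurj eSdd eB2, of "Hom_Hd G rhoR rhoV"]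
      unfolding Hom_H_def Hom_Hd_def by blast
    have "\<forall>h\<in>Hom_H G rhoR rhoV. \<forall>r. T (h *v r, 0) = (A1 h *v K r, 0)"
      by (simp add: A1(3) TS)
    moreover have "\<forall>f\<in>Hom_Hd G rhoR rhoV. \<forall>t. T (0, f *v t) = (0, A2 f *v B2 t)"
      by (simp add: A2(3) TSdd)
    ultimately show ?thesis using A1(1,2) A2(1,2) semilin_antilin[OF K(1)] semilin_antilin[OF sB2]
      apply - apply (rule exI[where x=A1], rule exI[where x=K], rule exI[where x=A2], rule exI[where x=B2])
      by (intro conjI; assumption)
  qed
  show ?thesis using P1 P2 by blast
qed

end
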